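(* The transformation $\mathcal{A}_1$ is not an Upsilon transformation: there is no measure $\tau$ on $(0,\infty)$ such that $\mathcal{A}_1(\rho)(B)=\int_0^\infty\rho(u^{-1}B)\tau(\mathrm{d}u)$ for all $\rho\in\mathfrak{M}_L^1(\mathbb{R}^d)$ and all Borel sets $B\subset\mathbb{R}^d$.
   Context: A Lévy measure on $\mathbb{R}^d$ is a measure $\nu$ with $\nu(\{0\})=0$ and $\int(1\wedge|x|^2)\nu(\mathrm{d}x)<\infty$; $\mathfrak{M}_L^1(\mathbb{R}^d)$ is the class of those with $\int(1\wedge|x|)\nu(\mathrm{d}x)<\infty$. $a_1(r;s)=2\pi^{-1}(s-r^2)^{-1/2}$ for $0<r<s^{1/2}$, $0$ otherwise; $\mathcal{A}_1(\nu)(B)=\int_{\mathbb{R}^d\setminus\{0\}}\nu(\mathrm{d}x)\int_0^\infty a_1(r;|x|)1_B(rx/|x|)\mathrm{d}r$. Here $u^{-1}B=\{u^{-1}x:x\in B\}$. *)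

theory Defs
  imports "HOL-Analysis.Analysis"
begin

definition a1 :: "real \<Rightarrow> real \<Rightarrow> real" where
  "a1 r s = (if 0 < r \<and> r < sqrt s then 2 / pi * (1 / sqrt (s - r\<^sup>2)) else 0)"

definition levy_measure :: "'a::euclidean_space measure \<Rightarrow> bool" where
  "levy_measure \<nu> \<longleftrightarrow> sets \<nu> = sets borel \<and> emeasure \<nu> {0} = 0 \<and>
     (\<integral>\<^sup>+ x. ennreal (min 1 ((norm x)\<^sup>2)) \<partial>\<nu>) < \<infinity>"

definition levy_L1 :: "'a::euclidean_space measure \<Rightarrow> bool" where
  "levy_L1 \<nu> \<longleftrightarrow> levy_measure \<nu> \<and> (\<integral>\<^sup>+ x. ennreal (min 1 (norm x)) \<partial>\<nu>) < \<infinity>"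

definition A1 :: "'a::euclidean_space measure \<Rightarrow> 'a set \<Rightarrow> ennreal" where
  "A1 \<nu> B = (\<integral>\<^sup>+ x. indicator (- {0}) x *
      (\<integral>\<^sup>+ r. ennreal (a1 r (norm x)) * indicator B (r *\<^sub>R (x /\<^sub>R norm x)) \<partial>lborel) \<partial>\<nu>)"

end

theory Submission
  imports Defs "HOL-Probability.Giry_Monad"
begin

definition Bset :: "'a::euclidean_space \<Rightarrow> real set \<Rightarrow> 'a set" where
  "Bset e I = {y. y = (y \<bullet> e) *\<^sub>R e \<and> y \<bullet> e \<in> I}"

lemma Bset_borel: "open I \<Longrightarrow> Bset e I \<in> sets borel"
proof -
  assume "open I"
  have "Bset e I = {y. y - (y \<bullet> e) *\<^sub>R e = 0} \<inter> (\<lambda>y. y \<bullet> e) -` I"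
    unfolding Bset_def by auto
  moreover have "closed {y. y - (y \<bullet> e) *\<^sub>R e = 0}"
    by (intro closed_Collect_eq continuous_intros)
  moreover have "open ((\<lambda>y. y \<bullet> e) -` I)"
    using \<open>open I\<close> by (intro open_vimage continuous_intros)
  ultimately show ?thesis by (simp add: borel_closed borel_open sets.Int)
qed

lemma Bset_mem: "norm e = 1 \<Longrightarrow> (r *\<^sub>R e \<in> Bset e I) = (r \<in> I)"
  unfolding Bset_def by (simp add: inner_commute dot_square_norm)

lemma levy_return: "(x::'a::euclidean_space) \<noteq> 0 \<Longrightarrow> levy_L1 (return borel x)"
  unfolding levy_L1_def levy_measure_def
  by (auto simp: nn_integral_return)

lemma int_return:
  "(\<integral>\<^sup>+ y. g y \<partial>(return borel (x::'a::euclidean_space))) = g x"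
proof -
  have "(\<integral>\<^sup>+ y. g y \<partial>(return borel x)) = (\<integral>\<^sup>+ y. g x \<partial>(return borel x))"
  proof (rule nn_integral_cong_AE)
    have "AE y in return borel x. y = x" by (subst AE_return) auto
    then show "AE y in return borel x. g y = g x" by eventually_elim simp
  qed
  also have "\<dots> = g x" by (simp add: nn_integral_return)
  finally show ?thesis .
qed

lemma rhs_eq:
  fixes e :: "'a::euclidean_space"
  assumes e: "norm e = 1" and c: "c > 0" and I0: "0 \<notin> I" and oI: "open I"
  shows "emeasure (return borel (c *\<^sub>R e)) ((\<lambda>x. x /\<^sub>R u) ` Bset e I) = indicator {u. u * c \<in> I} u"
proof -
  have "(c *\<^sub>R e \<in> (\<lambda>x. x /\<^sub>R u) ` Bset e I) = (u * c \<in> I)"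
  proof (cases "u = 0")
    case True
    have "0 \<notin> Bset e I" using I0 unfolding Bset_def by auto
    then show ?thesis using True c e I0 by (auto simp: Bset_def)
  next
    case False
    have "(c *\<^sub>R e \<in> (\<lambda>x. x /\<^sub>R u) ` Bset e I) = (u *\<^sub>R (c *\<^sub>R e) \<in> Bset e I)"
    proof
      assume "c *\<^sub>R e \<in> (\<lambda>x. x /\<^sub>R u) ` Bset e I"
      then obtain y where "y \<in> Bset e I" "c *\<^sub>R e = y /\<^sub>R u" by auto
      then show "u *\<^sub>R (c *\<^sub>R e) \<in> Bset e I" using False by simp
    next
      assume "u *\<^sub>R (c *\<^sub>R e) \<in> Bset e I"
      moreover have "c *\<^sub>R e = (u *\<^sub>R (c *\<^sub>R e)) /\<^sub>R u" using False by simp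
      ultimately show "c *\<^sub>R e \<in> (\<lambda>x. x /\<^sub>R u) ` Bset e I" by blast
    qed
    also have "\<dots> = (u * c \<in> I)" using Bset_mem[OF e, of "u*c" I] by simp
    finally show ?thesis .
  qed
  moreover have "(\<lambda>x. x /\<^sub>R u) ` Bset e I \<in> sets borel"
  proof (cases "u = 0")
    case True
    then have "(\<lambda>x. x /\<^sub>R u) ` Bset e I = {} \<or> (\<lambda>x. x /\<^sub>R u) ` Bset e I = {0}" by auto
    then show ?thesis by auto
  next
    case False
    have im: "(\<lambda>x. x /\<^sub>R u) ` Bset e I = (\<lambda>x. u *\<^sub>R x) -` Bset e I"
    proof (rule set_eqI)
      fix x
      show "x \<in> (\<lambda>x. x /\<^sub>R u) ` Bset e I \<longleftrightarrow> x \<in> (\<lambda>x. u *\<^sub>R x) -` Bset e I"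
      proof
        assume "x \<in> (\<lambda>x. x /\<^sub>R u) ` Bset e I"
        then obtain y where "y \<in> Bset e I" "x = y /\<^sub>R u" by auto
        then show "x \<in> (\<lambda>x. u *\<^sub>R x) -` Bset e I" using False by simp
      next
        assume "x \<in> (\<lambda>x. u *\<^sub>R x) -` Bset e I"
        then have "u *\<^sub>R x \<in> Bset e I" by simp
        moreover have "x = (u *\<^sub>R x) /\<^sub>R u" using False by simp
        ultimately show "x \<in> (\<lambda>x. x /\<^sub>R u) ` Bset e I" by blast
      qed
    qed
    have ms: "(\<lambda>x::'a. u *\<^sub>R x) \<in> borel_measurable borel"
      by (intro borel_measurable_continuous_onI continuous_intros)
    show ?thesis unfolding im by (rule measurable_sets_borel[OF ms Bset_borel[OF oI]])
  qed
  ultimately show ?thesis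
    by (simp add: emeasure_return split: split_indicator)
qed

lemma lhs_eq:
  assumes e: "norm e = 1" and c: "c > 0"
  shows "A1 (return borel (c *\<^sub>R e)) (Bset e I) =
     (\<integral>\<^sup>+ r. ennreal (a1 r c) * indicator I r \<partial>lborel)"
proof -
  have n: "norm (c *\<^sub>R e) = c" using e c by simp
  have x: "(c *\<^sub>R e) /\<^sub>R norm (c *\<^sub>R e) = e" using n c by simp
  have nz: "c *\<^sub>R e \<noteq> 0" using e c by auto
  show ?thesis unfolding A1_def int_return n x
    using nz by (simp add: Bset_mem[OF e] indicator_def)
qed

theorem theorem3p10:
  shows "\<not> (\<exists>\<tau> :: real measure. sets \<tau> = sets borel \<and> emeasure \<tau> {..0} = 0 \<and>
           (\<forall>\<rho> :: 'a::euclidean_space measure. levy_L1 \<rho> \<longrightarrow>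
              (\<forall>B \<in> sets (borel :: 'a measure).
                 A1 \<rho> B = (\<integral>\<^sup>+ u. emeasure \<rho> ((\<lambda>x. x /\<^sub>R u) ` B) \<partial>\<tau>))))"
proof
  assume "\<exists>\<tau> :: real measure. sets \<tau> = sets borel \<and> emeasure \<tau> {..0} = 0 \<and>
           (\<forall>\<rho> :: 'a::euclidean_space measure. levy_L1 \<rho> \<longrightarrow>
              (\<forall>B \<in> sets (borel :: 'a measure).
                 A1 \<rho> B = (\<integral>\<^sup>+ u. emeasure \<rho> ((\<lambda>x. x /\<^sub>R u) ` B) \<partial>\<tau>)))"
  then obtain \<tau> :: "real measure" where H: "\<And>\<rho> :: 'a measure. levy_L1 \<rho> \<Longrightarrow>
      (\<forall>B \<in> sets (borel :: 'a measure).
                 A1 \<rho> B = (\<integral>\<^sup>+ u. emeasure \<rho> ((\<lambda>x. x /\<^sub>R u) ` B) \<partial>\<tau>))" by blast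
  obtain e :: 'a where "e \<in> Basis" using nonempty_Basis by blast
  then have e: "norm e = 1" by simp
  have gen: "A1 (return borel (c *\<^sub>R e)) (Bset e I) = (\<integral>\<^sup>+ u. indicator {u. u * c \<in> I} u \<partial>\<tau>)"
    if "c > 0" "open I" "0 \<notin> I" for c I
  proof -
    have "c *\<^sub>R e \<noteq> 0" using e that by auto
    from H[OF levy_return[OF this]] Bset_borel[OF \<open>open I\<close>]
    have "A1 (return borel (c *\<^sub>R e)) (Bset e I) =
       (\<integral>\<^sup>+ u. emeasure (return borel (c *\<^sub>R e)) ((\<lambda>x. x /\<^sub>R u) ` Bset e I) \<partial>\<tau>)" by blast
    also have "\<dots> = (\<integral>\<^sup>+ u. indicator {u. u * c \<in> I} u \<partial>\<tau>)"
      using rhs_eq[OF e that(1) that(3) that(2)] by simp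
    finally show ?thesis .
  qed
  have s: "{u. u * 4 \<in> {2<..<4::real}} = {u. u * 1 \<in> {1/2<..<1::real}}" by auto
  have eq: "A1 (return borel (4 *\<^sub>R e)) (Bset e {2<..<4}) = A1 (return borel (1 *\<^sub>R e)) (Bset e {1/2<..<1})"
  proof -
    have g4: "A1 (return borel (4 *\<^sub>R e)) (Bset e {2<..<4}) = (\<integral>\<^sup>+ u. indicator {u. u * 4 \<in> {2<..<4::real}} u \<partial>\<tau>)"
      by (rule gen) auto
    have g1: "A1 (return borel (1 *\<^sub>R e)) (Bset e {1/2<..<1}) = (\<integral>\<^sup>+ u. indicator {u. u * 1 \<in> {1/2<..<1::real}} u \<partial>\<tau>)"
      by (rule gen) auto
    show ?thesis unfolding g4 g1 s ..
  qed
  have z: "(\<integral>\<^sup>+ r. ennreal (a1 r 4) * indicator {2<..<4} r \<partial>lborel) = 0"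
  proof -
    have "\<And>r. ennreal (a1 r 4) * indicator {2<..<4} r = 0"
      by (auto simp: a1_def indicator_def)
    then show ?thesis by (simp del: mult_eq_0_iff)
  qed
  have p: "(\<integral>\<^sup>+ r. ennreal (a1 r 1) * indicator {1/2<..<1} r \<partial>lborel) > 0"
  proof -
    have le: "(\<integral>\<^sup>+ r. ennreal (2/pi) * indicator {1/2<..<1::real} r \<partial>lborel)
        \<le> (\<integral>\<^sup>+ r. ennreal (a1 r 1) * indicator {1/2<..<1} r \<partial>lborel)" (is "?L \<le> ?R")
    proof (rule nn_integral_mono)
      fix r :: real
      show "ennreal (2/pi) * indicator {1/2<..<1} r \<le> ennreal (a1 r 1) * indicator {1/2<..<1} r"
      proof (cases "r \<in> {1/2<..<1}")
        case True
        then have r: "0 < r" "r < 1" by auto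
        have "0 < 1 - r\<^sup>2" using r by (simp add: power_less_one_iff abs_less_iff)
        then have "sqrt (1 - r\<^sup>2) \<le> 1" using r by (simp add: power_le_one)
        then have "1 \<le> 1 / sqrt (1 - r\<^sup>2)" using \<open>0 < 1 - r\<^sup>2\<close> by (simp add: divide_simps)
        then have "2/pi * 1 \<le> 2/pi * (1 / sqrt (1 - r\<^sup>2))"
          by (rule mult_left_mono) simp
        then have "2/pi \<le> 2/pi * (1 / sqrt (1 - r\<^sup>2))" by (simp only: mult_1_right)
        then show ?thesis using True r by (simp add: a1_def ennreal_leI)
      qed simp
    qed
    have L2: "?L = ennreal (2/pi) * ennreal (1/2)"
      by (subst nn_integral_cmult_indicator) auto
    have pos: "ennreal (2/pi) * ennreal (1/2) > 0" by (subst ennreal_mult[symmetric]) auto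
    have "0 < ?L" by (subst L2) (rule pos)
    from this le show ?thesis by (rule order.strict_trans2)
  qed
  have l4: "A1 (return borel (4 *\<^sub>R e)) (Bset e {2<..<4}) =
     (\<integral>\<^sup>+ r. ennreal (a1 r 4) * indicator {2<..<4} r \<partial>lborel)"
    by (rule lhs_eq[OF e]) simp
  have l1: "A1 (return borel (1 *\<^sub>R e)) (Bset e {1/2<..<1}) =
     (\<integral>\<^sup>+ r. ennreal (a1 r 1) * indicator {1/2<..<1} r \<partial>lborel)"
    by (rule lhs_eq[OF e]) simp
  have "(\<integral>\<^sup>+ r. ennreal (a1 r 1) * indicator {1/2<..<1} r \<partial>lborel) =
      A1 (return borel (1 *\<^sub>R e)) (Bset e {1/2<..<1})" by (rule l1[symmetric])
  also have "\<dots> = A1 (return borel (4 *\<^sub>R e)) (Bset e {2<..<4})" by (rule eq[symmetric])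
  also have "\<dots> = (\<integral>\<^sup>+ r. ennreal (a1 r 4) * indicator {2<..<4} r \<partial>lborel)" by (rule l4)
  also have "\<dots> = 0" by (rule z)
  finally have zz: "(\<integral>\<^sup>+ r. ennreal (a1 r 1) * indicator {1/2<..<1} r \<partial>lborel) = 0" .
  from p show False unfolding zz by (simp only: order_less_irrefl)
qed

end
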